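(* Let $(\mathsf{X},\mathscr{X})$ be a measurable space and $P$ a Markov kernel on $\mathsf{X}\times\mathscr{X}$ satisfying: (i) $P$ is irreducible and aperiodic with unique invariant probability $\pi$; (ii) there exist a non-empty set $\mathsf{C}\in\mathscr{X}$ and reals $u>1$, $M>0$ such that $\sup_{x\in\mathsf{C}}\mathbb{E}_x[u^{\sigma_{\mathsf{C}}}]\leqslant M$, where $\sigma_{\mathsf{C}}=\inf\{n\geqslant 1: X_n\in\mathsf{C}\}$; (iii) there exist $r\in(0,1)$ and $L\geqslant 1$ such that $\mathrm{d}_{\mathrm{TV}}(\delta_xP^n,\pi)\leqslant Lr^n$ for all $x\in\mathsf{C}$ and all $n\geqslant 0$. Let $n\geqslant 1$, $c=(c_0,\ldots,c_{n-1})\in\mathbb{R}_+^n$ and let $f:\mathsf{X}^n\to\mathbb{R}$ be measurable with $|f(x)-f(y)|\leqslant\sum_{i=0}^{n-1}c_i\mathbf{1}_{\{x_i\neq y_i\}}$ for all $x,y\in\mathsf{X}^n$. Set $g_{n-1}=g_{n-1,\pi}=f$ and, for $i\in\{0,\ldots,n-2\}$ and $(x_0,\ldots,x_i)\in\mathsf{X}^{i+1}$, \[ g_i(x_0,\ldots,x_i)=\mathbb{E}_{x_i}[f(x_0,\ldots,x_i,X_1,\ldots,X_{n-1-i})],\qquad g_{i,\pi}(x_0,\ldots,x_i)=\mathbb{E}_{\pi}[f(x_0,\ldots,x_i,X_1,\ldots,X_{n-1-i})]. \] Then for any $i\in\{0,\ldots,n-1\}$ and any $(x_0,\ldots,x_{i-1},x_i)\in\mathsf{X}^i\times\mathsf{C}$,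 \[ |g_i(x_0,\ldots,x_i)-g_{i,\pi}(x_0,\ldots,x_i)|\leqslant 2L\sum_{j=i+1}^{n-1}c_jr^{j-i}\;. \]
   Context: $(X_k)_{k\geqslant 0}$ is the canonical process on $\mathsf{X}^{\mathbb{Z}_+}$; for a probability measure $\xi$, $\mathbb{P}_\xi$ is the law under which $(X_k)$ is a Markov chain with kernel $P$ and initial distribution $\xi$, $\mathbb{E}_\xi$ its expectation, and $\mathbb{P}_x=\mathbb{P}_{\delta_x}$, $\mathbb{E}_x=\mathbb{E}_{\delta_x}$ with $\delta_x$ the Dirac mass at $x$. $\mathrm{d}_{\mathrm{TV}}(\mu,\nu)=\sup_{A\in\mathscr{X}}|\mu(A)-\nu(A)|$ is the total variation distance. An empty sum equals $0$. *)

theory Defs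
  imports "HOL-Probability.Probability"
begin

definition markov_kernel :: "'a measure \<Rightarrow> ('a \<Rightarrow> 'a measure) \<Rightarrow> bool" where
  "markov_kernel M P \<longleftrightarrow> P \<in> M \<rightarrow>\<^sub>M prob_algebra M"

fun kpow :: "'a measure \<Rightarrow> ('a \<Rightarrow> 'a measure) \<Rightarrow> nat \<Rightarrow> 'a \<Rightarrow> 'a measure" where
  "kpow M P 0 x = return M x"
| "kpow M P (Suc n) x = bind (kpow M P n x) P"

definition dTV :: "'a measure \<Rightarrow> 'a measure \<Rightarrow> 'a measure \<Rightarrow> real" where
  "dTV M \<mu> \<nu> = (SUP A\<in>sets M. \<bar>measure \<mu> A - measure \<nu> A\<bar>)"

text \<open>Finite-horizon expectation under the chain started at x:
  path_exp P m h x = E_x[ h(X_1, ..., X_m) ], where the argument of h is the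
  sequence ys with ys k = X_(k+1) for k < m (entries beyond m are irrelevant).\<close>
definition scons :: "'a \<Rightarrow> (nat \<Rightarrow> 'a) \<Rightarrow> nat \<Rightarrow> 'a" where
  "scons y ys = (\<lambda>k. if k = 0 then y else ys (k - 1))"

fun path_exp :: "('a \<Rightarrow> 'a measure) \<Rightarrow> nat \<Rightarrow> ((nat \<Rightarrow> 'a) \<Rightarrow> real) \<Rightarrow> 'a \<Rightarrow> real" where
  "path_exp P 0 h x = h (\<lambda>_. undefined)"
| "path_exp P (Suc m) h x = (\<integral>y. path_exp P m (\<lambda>ys. h (scons y ys)) y \<partial>P x)"

text \<open>P_x(sigma_C = k) for k >= 1, sigma_C the first return time (n >= 1) to C.\<close>
definition hit_prob :: "'a measure \<Rightarrow> ('a \<Rightarrow> 'a measure) \<Rightarrow> 'a set \<Rightarrow> nat \<Rightarrow> 'a \<Rightarrow> real" where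
  "hit_prob M P C k x = path_exp P k
     (\<lambda>ys. (\<Prod>j<k-1. indicator (space M - C) (ys j)) * indicator C (ys (k - 1))) x"

text \<open>E_x[u^sigma_C] in [0, \<infinity>], with u^\<infinity> = \<infinity> (u > 1) on the event sigma_C = \<infinity>.\<close>
definition exp_pow_return :: "'a measure \<Rightarrow> ('a \<Rightarrow> 'a measure) \<Rightarrow> 'a set \<Rightarrow> real \<Rightarrow> 'a \<Rightarrow> ennreal" where
  "exp_pow_return M P C u x =
     (\<Sum>k. ennreal (u ^ Suc k * hit_prob M P C (Suc k) x))
     + (if (\<Sum>k. ennreal (hit_prob M P C (Suc k) x)) < 1 then \<top> else 0)"

definition accessible :: "'a measure \<Rightarrow> ('a \<Rightarrow> 'a measure) \<Rightarrow> 'a set \<Rightarrow> bool" where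
  "accessible M P A \<longleftrightarrow> A \<in> sets M \<and>
     (\<forall>x\<in>space M. \<exists>n\<ge>1. measure (kpow M P n x) A > 0)"

definition small_set :: "'a measure \<Rightarrow> ('a \<Rightarrow> 'a measure) \<Rightarrow> 'a set \<Rightarrow> bool" where
  "small_set M P C \<longleftrightarrow> C \<in> sets M \<and>
     (\<exists>m\<ge>1. \<exists>\<mu>. sets \<mu> = sets M \<and> emeasure \<mu> (space M) \<noteq> 0 \<and>
        (\<forall>x\<in>C. \<forall>A\<in>sets M. emeasure \<mu> A \<le> emeasure (kpow M P m x) A))"

definition irreducible :: "'a measure \<Rightarrow> ('a \<Rightarrow> 'a measure) \<Rightarrow> bool" where
  "irreducible M P \<longleftrightarrow> (\<exists>C. accessible M P C \<and> small_set M P C)"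

definition return_times :: "'a measure \<Rightarrow> ('a \<Rightarrow> 'a measure) \<Rightarrow> 'a set \<Rightarrow> nat set" where
  "return_times M P C = {n. n \<ge> 1 \<and> (\<exists>\<epsilon>>0. \<forall>x\<in>C. measure (kpow M P n x) C \<ge> \<epsilon>)}"

definition aperiodic :: "'a measure \<Rightarrow> ('a \<Rightarrow> 'a measure) \<Rightarrow> bool" where
  "aperiodic M P \<longleftrightarrow> irreducible M P \<and>
     (\<exists>C. accessible M P C \<and> small_set M P C \<and> Gcd (return_times M P C) = 1)"

definition invariant_prob :: "'a measure \<Rightarrow> ('a \<Rightarrow> 'a measure) \<Rightarrow> 'a measure \<Rightarrow> bool" where
  "invariant_prob M P \<pi> \<longleftrightarrow> prob_space \<pi> \<and> sets \<pi> = sets M \<and> bind \<pi> P = \<pi>"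

text \<open>g_i and g_{i,pi} from the statement.  The argument of f is the vector
  (x_0,...,x_i,X_1,...,X_{n-1-i}), restricted to {..<n}.\<close>
definition glue :: "nat \<Rightarrow> nat \<Rightarrow> (nat \<Rightarrow> 'a) \<Rightarrow> (nat \<Rightarrow> 'a) \<Rightarrow> nat \<Rightarrow> 'a" where
  "glue n i x ys = (\<lambda>k. if k \<le> i then x k else if k < n then ys (k - i - 1) else undefined)"

definition g_fun :: "('a \<Rightarrow> 'a measure) \<Rightarrow> nat \<Rightarrow> ((nat \<Rightarrow> 'a) \<Rightarrow> real) \<Rightarrow> nat \<Rightarrow> (nat \<Rightarrow> 'a) \<Rightarrow> real" where
  "g_fun P n f i x = path_exp P (n - 1 - i) (\<lambda>ys. f (glue n i x ys)) (x i)"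

definition g_pi :: "('a \<Rightarrow> 'a measure) \<Rightarrow> 'a measure \<Rightarrow> nat \<Rightarrow> ((nat \<Rightarrow> 'a) \<Rightarrow> real) \<Rightarrow> nat \<Rightarrow> (nat \<Rightarrow> 'a) \<Rightarrow> real" where
  "g_pi P \<pi> n f i x = (\<integral>z. path_exp P (n - 1 - i) (\<lambda>ys. f (glue n i x ys)) z \<partial>\<pi>)"

end

theory Submission
  imports Defs
begin

lemma kernel_facts:
  assumes "markov_kernel M P" "x \<in> space M"
  shows "prob_space (P x)" "sets (P x) = sets M" "space (P x) = space M"
  using measurable_space[OF assms(1)[unfolded markov_kernel_def] assms(2)]
  by (auto simp: space_prob_algebra dest: sets_eq_imp_space_eq)

lemma kpow_meas:
  assumes "markov_kernel M P"
  shows "kpow M P k \<in> M \<rightarrow>\<^sub>M prob_algebra M"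
proof (induction k)
  case 0
  have "kpow M P 0 = return M" by (rule ext) simp
  then show ?case by simp
next
  case (Suc k)
  have "kpow M P (Suc k) = (\<lambda>x. bind (kpow M P k x) P)" by (rule ext) simp
  then show ?case using measurable_bind_prob_space[OF Suc assms[unfolded markov_kernel_def]] by simp
qed

lemma kpow_facts:
  assumes "markov_kernel M P" "x \<in> space M"
  shows "prob_space (kpow M P k x)" "sets (kpow M P k x) = sets M"
  using measurable_space[OF kpow_meas[OF assms(1)] assms(2)]
  by (auto simp: space_prob_algebra)

lemma kpow_Suc':
  assumes K: "markov_kernel M P" and x: "x \<in> space M"
  shows "kpow M P (Suc k) x = bind (P x) (kpow M P k)"
  using x
proof (induction k arbitrary: x)
  case 0
  have "kpow M P 1 x = bind (return M x) P" by simp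
  also have "\<dots> = P x"
    by (rule bind_return[OF measurable_prob_algebraD[OF K[unfolded markov_kernel_def]] 0])
  also have "\<dots> = bind (P x) (return M)"
    using bind_return''[of "P x" M] kernel_facts[OF K 0] by simp
  finally show ?case by (simp add: fun_eq_iff)
next
  case (Suc k)
  have "kpow M P (Suc (Suc k)) x = bind (kpow M P (Suc k) x) P" by simp
  also have "\<dots> = bind (bind (P x) (kpow M P k)) P" using Suc by simp
  also have "\<dots> = bind (P x) (\<lambda>y. bind (kpow M P k y) P)"
    apply (rule bind_assoc[where N=M and R=M])
     apply (subst measurable_cong_sets[OF kernel_facts(2)[OF K Suc.prems] refl])
     apply (rule measurable_prob_algebraD[OF kpow_meas[OF K]])
    by (rule measurable_prob_algebraD[OF K[unfolded markov_kernel_def]])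
  finally show ?case by simp
qed

lemma kpow_inv:
  assumes K: "markov_kernel M P" and inv: "invariant_prob M P \<pi>"
  shows "bind \<pi> (kpow M P k) = \<pi>"
proof (induction k)
  case 0
  have "kpow M P 0 = return M" by (rule ext) simp
  then show ?case using bind_return''[of \<pi> M] inv by (simp add: invariant_prob_def)
next
  case (Suc k)
  have "kpow M P (Suc k) = (\<lambda>x. bind (kpow M P k x) P)" by (rule ext) simp
  hence "bind \<pi> (kpow M P (Suc k)) = bind \<pi> (\<lambda>x. bind (kpow M P k x) P)" by simp
  also have "\<dots> = bind (bind \<pi> (kpow M P k)) P"
    apply (rule bind_assoc[where N=M and R=M, symmetric])
     apply (subst measurable_cong_sets[of \<pi> M, OF _ refl])
    using inv apply (simp add: invariant_prob_def)
     apply (rule measurable_prob_algebraD[OF kpow_meas[OF K]])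
    by (rule measurable_prob_algebraD[OF K[unfolded markov_kernel_def]])
  also have "\<dots> = \<pi>" using Suc inv by (simp add: invariant_prob_def)
  finally show ?case .
qed

lemma scons_meas:
  "(\<lambda>(y, ys). scons y ys) \<in> M \<Otimes>\<^sub>M PiM {..<m} (\<lambda>_. M) \<rightarrow>\<^sub>M PiM {..<Suc m} (\<lambda>_. M)"
proof (rule measurable_PiM_single')
  fix j assume j: "j \<in> {..<Suc m}"
  show "(\<lambda>\<omega>. (case \<omega> of (y, ys) \<Rightarrow> scons y ys) j) \<in> M \<Otimes>\<^sub>M PiM {..<m} (\<lambda>_. M) \<rightarrow>\<^sub>M M"
  proof (cases "j = 0")
    case True
    then show ?thesis by (simp add: scons_def case_prod_beta)
  next
    case False
    then have e: "(\<lambda>\<omega>. (case \<omega> of (y, ys) \<Rightarrow> scons y ys) j) = (\<lambda>\<omega>. snd \<omega> (j - 1))"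
      by (auto simp: scons_def fun_eq_iff)
    have jm: "j - 1 \<in> {..<m}" using j False by auto
    have "(\<lambda>\<omega>. snd \<omega> (j - 1)) \<in> M \<Otimes>\<^sub>M PiM {..<m} (\<lambda>_. M) \<rightarrow>\<^sub>M M"
      using measurable_compose[OF measurable_snd measurable_component_singleton[OF jm], of M "\<lambda>_. M"]
      by (simp add: comp_def)
    then show ?thesis unfolding e .
  qed
next
  show "(\<lambda>(y, ys). scons y ys) \<in> space (M \<Otimes>\<^sub>M PiM {..<m} (\<lambda>_. M)) \<rightarrow> (\<Pi>\<^sub>E i\<in>{..<Suc m}. space M)"
  proof
    fix p assume "p \<in> space (M \<Otimes>\<^sub>M PiM {..<m} (\<lambda>_. M))"
    then obtain y ys where p: "p = (y, ys)" "y \<in> space M" "ys \<in> (\<Pi>\<^sub>E i\<in>{..<m}. space M)"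
      by (auto simp: space_pair_measure space_PiM)
    have "scons y ys \<in> (\<Pi>\<^sub>E i\<in>{..<Suc m}. space M)"
      unfolding PiE_iff extensional_def using p(2,3)
      by (auto simp: scons_def PiE_iff extensional_def)
    then show "(\<lambda>(y, ys). scons y ys) p \<in> (\<Pi>\<^sub>E i\<in>{..<Suc m}. space M)" using p by simp
  qed
qed

lemma scons_meas1:
  assumes "y \<in> space M"
  shows "scons y \<in> PiM {..<m} (\<lambda>_. M) \<rightarrow>\<^sub>M PiM {..<Suc m} (\<lambda>_. M)"
  using measurable_Pair2[OF scons_meas[of M m] assms] by simp

lemma scons_space:
  "y \<in> space M \<Longrightarrow> ys \<in> space (PiM {..<m} (\<lambda>_. M)) \<Longrightarrow> scons y ys \<in> space (PiM {..<Suc m} (\<lambda>_. M))"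
  by (metis measurable_space scons_meas1)

fun pm :: "'a measure \<Rightarrow> ('a \<Rightarrow> 'a measure) \<Rightarrow> nat \<Rightarrow> 'a \<Rightarrow> (nat \<Rightarrow> 'a) measure" where
  "pm M P 0 x = return (PiM {..<0} (\<lambda>_. M)) (\<lambda>_. undefined)"
| "pm M P (Suc m) x = bind (P x) (\<lambda>y. distr (pm M P m y) (PiM {..<Suc m} (\<lambda>_. M)) (scons y))"

lemma pm_meas:
  assumes K: "markov_kernel M P"
  shows "pm M P m \<in> M \<rightarrow>\<^sub>M prob_algebra (PiM {..<m} (\<lambda>_. M))"
proof (induction m)
  case 0
  have "return (PiM {..<0} (\<lambda>_. M)) (\<lambda>_. undefined) \<in> space (prob_algebra (PiM {..<0::nat} (\<lambda>_. M)))"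
    by (rule measurable_space[OF measurable_return_prob_space]) (simp add: space_PiM)
  then show ?case by simp
next
  case (Suc m)
  have d: "(\<lambda>y. distr (pm M P m y) (PiM {..<Suc m} (\<lambda>_. M)) (scons y)) \<in> M \<rightarrow>\<^sub>M prob_algebra (PiM {..<Suc m} (\<lambda>_. M))"
    by (rule measurable_distr_prob_space2[OF Suc scons_meas])
  have "pm M P (Suc m) = (\<lambda>x. bind (P x) (\<lambda>y. distr (pm M P m y) (PiM {..<Suc m} (\<lambda>_. M)) (scons y)))"
    by (rule ext) simp
  then show ?case using measurable_bind_prob_space[OF K[unfolded markov_kernel_def] d] by simp
qed

lemma pm_facts:
  assumes "markov_kernel M P" "x \<in> space M"
  shows "prob_space (pm M P m x)" "sets (pm M P m x) = sets (PiM {..<m} (\<lambda>_. M))"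
    "space (pm M P m x) = space (PiM {..<m} (\<lambda>_. M))"
  using measurable_space[OF pm_meas[OF assms(1)] assms(2)]
  by (auto simp: space_prob_algebra dest: sets_eq_imp_space_eq)

lemma abs_integral_bound:
  fixes h :: "_ \<Rightarrow> real"
  assumes "prob_space N" "h \<in> borel_measurable N" "\<forall>y\<in>space N. \<bar>h y\<bar> \<le> B"
  shows "\<bar>integral\<^sup>L N h\<bar> \<le> B"
proof -
  interpret prob_space N by fact
  have int: "integrable N h"
    by (rule integrable_const_bound[where B=B]) (use assms in auto)
  have "\<bar>integral\<^sup>L N h\<bar> \<le> (\<integral>y. \<bar>h y\<bar> \<partial>N)"
    using integral_norm_bound[of N h] by simp
  also have "\<dots> \<le> (\<integral>y. B \<partial>N)"
    by (rule integral_mono) (use int assms in auto)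
  finally show ?thesis by (simp add: prob_space)
qed

lemma pe_pm:
  assumes K: "markov_kernel M P"
  shows "h \<in> borel_measurable (PiM {..<m} (\<lambda>_. M)) \<Longrightarrow>
    \<forall>ys\<in>space (PiM {..<m} (\<lambda>_. M)). \<bar>h ys\<bar> \<le> B \<Longrightarrow> x \<in> space M \<Longrightarrow>
    path_exp P m h x = integral\<^sup>L (pm M P m x) h"
proof (induction m arbitrary: h x)
  case 0
  have "(\<lambda>_. undefined) \<in> space (PiM {..<0::nat} (\<lambda>_. M))" by (simp add: space_PiM)
  then show ?case using 0 by (simp add: integral_return)
next
  case (Suc m)
  let ?N = "PiM {..<Suc m} (\<lambda>_. M)"
  let ?D = "\<lambda>y. distr (pm M P m y) ?N (scons y)"
  have d: "?D \<in> M \<rightarrow>\<^sub>M prob_algebra ?N"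
    by (rule measurable_distr_prob_space2[OF pm_meas[OF K] scons_meas])
  have d': "?D \<in> P x \<rightarrow>\<^sub>M subprob_algebra ?N"
    apply (subst measurable_cong_sets[OF kernel_facts(2)[OF K Suc.prems(3)] refl])
    by (rule measurable_prob_algebraD[OF d])
  interpret px: prob_space "P x" using kernel_facts[OF K Suc.prems(3)] by simp
  have "integral\<^sup>L (pm M P (Suc m) x) h = (\<integral>y. integral\<^sup>L (?D y) h \<partial>P x)"
    apply (simp only: pm.simps)
    apply (rule integral_bind[where B=B and B'=1 and K="?N"])
    using Suc.prems apply blast
    using Suc.prems apply blast
      apply (rule d')
     apply (rule px.finite_measure_axioms)
    apply (rule AE_I2)
    using measurable_space[OF d'] by (auto simp: space_subprob_algebra dest: subprob_space.subprob_emeasure_le_1)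
  also have "\<dots> = (\<integral>y. path_exp P m (\<lambda>ys. h (scons y ys)) y \<partial>P x)"
  proof (rule Bochner_Integration.integral_cong[OF refl])
    fix y assume y: "y \<in> space (P x)"
    then have y': "y \<in> space M" using kernel_facts[OF K Suc.prems(3)] by simp
    have "integral\<^sup>L (?D y) h = (\<integral>ys. h (scons y ys) \<partial>pm M P m y)"
      apply (rule integral_distr)
       apply (subst measurable_cong_sets[OF pm_facts(2)[OF K y'] refl])
       apply (rule scons_meas1[OF y'])
      by (rule Suc.prems(1))
    also have "\<dots> = path_exp P m (\<lambda>ys. h (scons y ys)) y"
      apply (rule Suc.IH[symmetric])
        apply (rule measurable_compose[OF scons_meas1[OF y'] Suc.prems(1)])
      using Suc.prems(2) scons_space[OF y'] y' by auto
    finally show "integral\<^sup>L (?D y) h = path_exp P m (\<lambda>ys. h (scons y ys)) y" .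
  qed
  finally show ?case unfolding path_exp.simps by (rule sym)
qed

lemma pe_meas:
  assumes K: "markov_kernel M P"
    and h: "h \<in> borel_measurable (PiM {..<m} (\<lambda>_. M))"
    and hb: "\<forall>ys\<in>space (PiM {..<m} (\<lambda>_. M)). \<bar>h ys\<bar> \<le> B"
  shows "(\<lambda>z. path_exp P m h z) \<in> borel_measurable M"
    "\<forall>z\<in>space M. \<bar>path_exp P m h z\<bar> \<le> B"
proof -
  have mi: "(\<lambda>z. integral\<^sup>L (pm M P m z) h) \<in> borel_measurable M"
    by (rule measurable_compose[OF measurable_prob_algebraD[OF pm_meas[OF K]] integral_measurable_subprob_algebra[OF h]])
  have ce: "(\<lambda>z. path_exp P m h z) \<in> borel_measurable M \<longleftrightarrow> (\<lambda>z. integral\<^sup>L (pm M P m z) h) \<in> borel_measurable M"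
    by (rule measurable_cong) (rule pe_pm[OF K h hb])
  show "(\<lambda>z. path_exp P m h z) \<in> borel_measurable M" by (rule iffD2[OF ce mi])
  show "\<forall>z\<in>space M. \<bar>path_exp P m h z\<bar> \<le> B"
  proof
    fix z assume z: "z \<in> space M"
    show "\<bar>path_exp P m h z\<bar> \<le> B"
      unfolding pe_pm[OF K h hb z]
      apply (rule abs_integral_bound)
        apply (rule pm_facts(1)[OF K z])
       apply (subst measurable_cong_sets[OF pm_facts(2)[OF K z] refl])
       apply (rule h)
      using pm_facts(3)[OF K z] hb by simp
  qed
qed

lemma phi_meas:
  assumes K: "markov_kernel M P"
    and G: "G \<in> borel_measurable (PiM {..<Suc m} (\<lambda>_. M))"
    and Gb: "\<forall>ys\<in>space (PiM {..<Suc m} (\<lambda>_. M)). \<bar>G ys\<bar> \<le> B"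
  shows "(\<lambda>z. path_exp P m (\<lambda>ys. G (scons z ys)) z) \<in> borel_measurable M"
    "\<forall>z\<in>space M. \<bar>path_exp P m (\<lambda>ys. G (scons z ys)) z\<bar> \<le> B"
proof -
  let ?N = "PiM {..<Suc m} (\<lambda>_. M)"
  have Gz: "(\<lambda>ys. G (scons z ys)) \<in> borel_measurable (PiM {..<m} (\<lambda>_. M))"
    "\<forall>ys\<in>space (PiM {..<m} (\<lambda>_. M)). \<bar>G (scons z ys)\<bar> \<le> B" if z: "z \<in> space M" for z
     apply (rule measurable_compose[OF scons_meas1[OF z] G])
    using Gb scons_space[OF z] by blast
  have eq: "path_exp P m (\<lambda>ys. G (scons z ys)) z = integral\<^sup>L (distr (pm M P m z) ?N (scons z)) G"
    if z: "z \<in> space M" for z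
    unfolding pe_pm[OF K Gz[OF z] z]
    apply (rule integral_distr[symmetric])
     apply (subst measurable_cong_sets[OF pm_facts(2)[OF K z] refl])
     apply (rule scons_meas1[OF z])
    by (rule G)
  have mi: "(\<lambda>z. integral\<^sup>L (distr (pm M P m z) ?N (scons z)) G) \<in> borel_measurable M"
    by (rule measurable_compose[OF measurable_prob_algebraD[OF measurable_distr_prob_space2[OF pm_meas[OF K] scons_meas]]
          integral_measurable_subprob_algebra[OF G]])
  have ce: "(\<lambda>z. path_exp P m (\<lambda>ys. G (scons z ys)) z) \<in> borel_measurable M \<longleftrightarrow> (\<lambda>z. integral\<^sup>L (distr (pm M P m z) ?N (scons z)) G) \<in> borel_measurable M"
    by (rule measurable_cong) (rule eq)
  show "(\<lambda>z. path_exp P m (\<lambda>ys. G (scons z ys)) z) \<in> borel_measurable M" by (rule iffD2[OF ce mi])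
  show "\<forall>z\<in>space M. \<bar>path_exp P m (\<lambda>ys. G (scons z ys)) z\<bar> \<le> B"
    using pe_meas(2)[OF K Gz] by blast
qed

lemma markov_shift:
  assumes K: "markov_kernel M P"
    and G: "G \<in> borel_measurable (PiM {..<Suc m} (\<lambda>_. M))"
    and Gb: "\<forall>ys\<in>space (PiM {..<Suc m} (\<lambda>_. M)). \<bar>G ys\<bar> \<le> B"
  shows "x \<in> space M \<Longrightarrow> path_exp P (k + Suc m) (\<lambda>ys. G (\<lambda>j. ys (j + k))) x
     = (\<integral>z. path_exp P m (\<lambda>ys. G (scons z ys)) z \<partial>kpow M P (Suc k) x)"
proof (induction k arbitrary: x)
  case 0
  have kp: "kpow M P (Suc 0) x = P x"
    using bind_return[OF measurable_prob_algebraD[OF K[unfolded markov_kernel_def]] 0] by simp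
  have e: "(\<lambda>ys. G (\<lambda>j. ys (j + 0))) = G" by simp
  show ?case by (simp only: add_0 e kp path_exp.simps(2))
next
  case (Suc k)
  let ?phi = "\<lambda>z. path_exp P m (\<lambda>ys. G (scons z ys)) z"
  have "path_exp P (Suc k + Suc m) (\<lambda>ys. G (\<lambda>j. ys (j + Suc k))) x
      = (\<integral>y. path_exp P (k + Suc m) (\<lambda>ys. G (\<lambda>j. ys (j + k))) y \<partial>P x)"
  proof -
    have e: "\<And>y. (\<lambda>ys. G (\<lambda>j. scons y ys (j + Suc k))) = (\<lambda>ys. G (\<lambda>j. ys (j + k)))"
      by (simp add: scons_def)
    show ?thesis by (simp only: add_Suc path_exp.simps(2) e)
  qed
  also have "\<dots> = (\<integral>y. (\<integral>z. ?phi z \<partial>kpow M P (Suc k) y) \<partial>P x)"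
    apply (rule Bochner_Integration.integral_cong[OF refl])
    apply (rule Suc.IH)
    using kernel_facts[OF K Suc.prems] by simp
  also have "\<dots> = (\<integral>z. ?phi z \<partial>bind (P x) (kpow M P (Suc k)))"
    apply (rule integral_bind[where B=B and B'=1 and K=M, symmetric])
    using phi_meas[OF K G Gb] apply auto[2]
      apply (subst measurable_cong_sets[OF kernel_facts(2)[OF K Suc.prems] refl])
      apply (rule measurable_prob_algebraD[OF kpow_meas[OF K]])
    using kernel_facts[OF K Suc.prems] apply (simp add: prob_space_def)
    apply (rule AE_I2)
    subgoal for y
      using kpow_facts(1)[OF K, of y "Suc k"] kernel_facts(3)[OF K Suc.prems]
      by (simp add: prob_space.emeasure_space_1 del: kpow.simps)
    done
  also have "\<dots> = (\<integral>z. ?phi z \<partial>kpow M P (Suc (Suc k)) x)"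
    by (simp only: kpow_Suc'[OF K Suc.prems, of "Suc k"])
  finally show ?case .
qed

lemma inv_integral:
  fixes phi :: "'a \<Rightarrow> real" and B :: real
  assumes K: "markov_kernel M P" and inv: "invariant_prob M P \<pi>"
    and phi: "phi \<in> borel_measurable M" and pb: "\<forall>z\<in>space M. \<bar>phi z\<bar> \<le> B"
  shows "(\<integral>z. (\<integral>w. phi w \<partial>kpow M P k z) \<partial>\<pi>) = (\<integral>w. phi w \<partial>\<pi>)"
proof -
  have ps: "prob_space \<pi>" "sets \<pi> = sets M" using inv by (auto simp: invariant_prob_def)
  have "(\<integral>z. (\<integral>w. phi w \<partial>kpow M P k z) \<partial>\<pi>) = (\<integral>w. phi w \<partial>bind \<pi> (kpow M P k))"
    apply (rule integral_bind[where B=B and B'=1 and K=M, symmetric])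
    using phi pb apply auto[2]
      apply (subst measurable_cong_sets[OF ps(2) refl])
      apply (rule measurable_prob_algebraD[OF kpow_meas[OF K]])
    using ps apply (simp add: prob_space_def)
    apply (rule AE_I2)
    subgoal for y
      using kpow_facts(1)[OF K, of y k] sets_eq_imp_space_eq[OF ps(2)]
      by (simp add: prob_space.emeasure_space_1 del: kpow.simps)
    done
  then show ?thesis using kpow_inv[OF K inv] by simp
qed

lemma count_floor:
  fixes t :: real and N :: nat
  assumes "0 \<le> t" "t \<le> real N"
  shows "(\<Sum>k\<in>{1..N}. (if real k \<le> t then 1 else 0::real)) = of_int \<lfloor>t\<rfloor>"
proof -
  define fl where "fl = nat \<lfloor>t\<rfloor>"
  have fl: "real fl = of_int \<lfloor>t\<rfloor>" using assms by (simp add: fl_def)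
  have flN: "fl \<le> N" using assms unfolding fl_def
    by (metis floor_mono floor_of_nat nat_le_iff of_int_of_nat_eq)
  have set: "{k\<in>{1..N}. real k \<le> t} = {1..fl}"
  proof -
    have iff: "real k \<le> t \<longleftrightarrow> k \<le> fl" for k
    proof -
      have "real k \<le> t \<longleftrightarrow> int k \<le> \<lfloor>t\<rfloor>" by (simp add: le_floor_iff)
      also have "\<dots> \<longleftrightarrow> k \<le> fl" unfolding fl_def
        by (rule le_nat_iff[symmetric]) (simp add: assms(1))
      finally show ?thesis .
    qed
    show ?thesis
    proof (rule set_eqI)
      fix k
      show "k \<in> {k\<in>{1..N}. real k \<le> t} \<longleftrightarrow> k \<in> {1..fl}"
        unfolding mem_Collect_eq atLeastAtMost_iff iff using flN by linarith
    qed
  qed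
  have "(\<Sum>k\<in>{1..N}. (if real k \<le> t then 1 else 0::real)) = (\<Sum>k\<in>{k\<in>{1..N}. real k \<le> t}. 1::real)"
    by (rule sum.inter_filter[symmetric]) simp
  also have "\<dots> = real (card {k\<in>{1..N}. real k \<le> t})" by simp
  also have "\<dots> = real fl" using set by simp
  finally show ?thesis using fl by simp
qed

lemma tv01:
  fixes \<psi> :: "'a \<Rightarrow> real"
  assumes mu: "prob_space \<mu>" "sets \<mu> = sets M"
    and nu: "prob_space \<nu>" "sets \<nu> = sets M"
    and psi: "\<psi> \<in> borel_measurable M" and pb: "\<forall>x\<in>space M. 0 \<le> \<psi> x \<and> \<psi> x \<le> 1"
    and d: "\<forall>A\<in>sets M. measure \<mu> A - measure \<nu> A \<le> d"
  shows "(\<integral>x. \<psi> x \<partial>\<mu>) - (\<integral>x. \<psi> x \<partial>\<nu>) \<le> d"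
proof -
  have smu: "space \<mu> = space M" using sets_eq_imp_space_eq[OF mu(2)] .
  have snu: "space \<nu> = space M" using sets_eq_imp_space_eq[OF nu(2)] .
  interpret mu: prob_space \<mu> by fact
  interpret nu: prob_space \<nu> by fact
  have psi_mu: "\<psi> \<in> borel_measurable \<mu>" by (subst measurable_cong_sets[OF mu(2) refl]) (rule psi)
  have psi_nu: "\<psi> \<in> borel_measurable \<nu>" by (subst measurable_cong_sets[OF nu(2) refl]) (rule psi)
  have int_mu: "integrable \<mu> \<psi>"
    by (rule mu.integrable_const_bound[where B=1]) (use pb smu psi_mu in auto)
  have int_nu: "integrable \<nu> \<psi>"
    by (rule nu.integrable_const_bound[where B=1]) (use pb snu psi_nu in auto)
  have key: "(\<integral>x. \<psi> x \<partial>\<mu>) - (\<integral>x. \<psi> x \<partial>\<nu>) \<le> d + 1 / real N" if N: "N \<ge> 1" for N :: nat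
  proof -
    define A where "A k = {x\<in>space M. real k \<le> real N * \<psi> x}" for k :: nat
    have A: "A k \<in> sets M" for k
      unfolding A_def by (rule borel_measurable_le) (use psi in auto)
    define q where "q x = (\<Sum>k\<in>{1..N}. indicator (A k) x :: real)" for x
    have q: "real N * \<psi> x - 1 \<le> q x \<and> q x \<le> real N * \<psi> x" if x: "x \<in> space M" for x
    proof -
      have "q x = (\<Sum>k\<in>{1..N}. (if real k \<le> real N * \<psi> x then 1 else 0::real))"
        unfolding q_def by (rule sum.cong[OF refl]) (use x in \<open>simp add: A_def indicator_def\<close>)
      also have "\<dots> = of_int \<lfloor>real N * \<psi> x\<rfloor>"
      proof (rule count_floor)
        have p: "0 \<le> \<psi> x" "\<psi> x \<le> 1" using pb x by auto
        show "0 \<le> real N * \<psi> x" using p(1) by simp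
        show "real N * \<psi> x \<le> real N" using mult_left_le[OF p(2), of "real N"] by simp
      qed
      finally show ?thesis by linarith
    qed
    have Asub: "A k \<inter> space M = A k" for k unfolding A_def by auto
    have indmu: "integrable \<mu> (indicator (A k) :: 'a \<Rightarrow> real)" for k
      by (rule integrable_real_indicator) (use A mu(2) mu.emeasure_finite in \<open>auto simp: less_top[symmetric]\<close>)
    have indnu: "integrable \<nu> (indicator (A k) :: 'a \<Rightarrow> real)" for k
      by (rule integrable_real_indicator) (use A nu(2) nu.emeasure_finite in \<open>auto simp: less_top[symmetric]\<close>)
    have qint: "integrable \<mu> q" "integrable \<nu> q"
      unfolding q_def
      subgoal by (rule Bochner_Integration.integrable_sum) (rule indmu)
      subgoal by (rule Bochner_Integration.integrable_sum) (rule indnu)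
      done
    have Imu: "(\<integral>x. q x \<partial>\<mu>) = (\<Sum>k\<in>{1..N}. measure \<mu> (A k))"
      unfolding q_def Bochner_Integration.integral_sum[OF indmu] Bochner_Integration.integral_indicator smu Asub ..
    have Inu: "(\<integral>x. q x \<partial>\<nu>) = (\<Sum>k\<in>{1..N}. measure \<nu> (A k))"
      unfolding q_def Bochner_Integration.integral_sum[OF indnu] Bochner_Integration.integral_indicator snu Asub ..
    have i1: "real N * (\<integral>x. \<psi> x \<partial>\<mu>) \<le> (\<Sum>k\<in>{1..N}. measure \<mu> (A k)) + 1"
    proof -
      have "real N * (\<integral>x. \<psi> x \<partial>\<mu>) = (\<integral>x. real N * \<psi> x \<partial>\<mu>)" by simp
      also have "\<dots> \<le> (\<integral>x. q x + 1 \<partial>\<mu>)"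
      proof (rule integral_mono)
        show "integrable \<mu> (\<lambda>x. real N * \<psi> x)" using int_mu by simp
        show "integrable \<mu> (\<lambda>x. q x + 1)" using qint(1) by simp
        fix x assume "x \<in> space \<mu>"
        then have "x \<in> space M" using smu by simp
        from q[OF this] show "real N * \<psi> x \<le> q x + 1" by linarith
      qed
      also have "\<dots> = (\<integral>x. q x \<partial>\<mu>) + 1"
        using qint by (simp add: mu.prob_space)
      finally show ?thesis using Imu by simp
    qed
    have i2: "(\<Sum>k\<in>{1..N}. measure \<nu> (A k)) \<le> real N * (\<integral>x. \<psi> x \<partial>\<nu>)"
    proof -
      have "(\<Sum>k\<in>{1..N}. measure \<nu> (A k)) = (\<integral>x. q x \<partial>\<nu>)" using Inu by simp
      also have "\<dots> \<le> (\<integral>x. real N * \<psi> x \<partial>\<nu>)"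
      proof (rule integral_mono)
        show "integrable \<nu> (\<lambda>x. real N * \<psi> x)" using int_nu by simp
        show "integrable \<nu> q" using qint(2) by simp
        fix x assume "x \<in> space \<nu>"
        then have "x \<in> space M" using snu by simp
        from q[OF this] show "q x \<le> real N * \<psi> x" by linarith
      qed
      finally show ?thesis by simp
    qed
    have i3: "(\<Sum>k\<in>{1..N}. measure \<mu> (A k)) - (\<Sum>k\<in>{1..N}. measure \<nu> (A k)) \<le> real N * d"
    proof -
      have "(\<Sum>k\<in>{1..N}. measure \<mu> (A k)) - (\<Sum>k\<in>{1..N}. measure \<nu> (A k))
          = (\<Sum>k\<in>{1..N}. measure \<mu> (A k) - measure \<nu> (A k))" by (simp add: sum_subtractf)
      also have "\<dots> \<le> (\<Sum>k\<in>{1..N}. d)" by (rule sum_mono) (use d A in auto)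
      finally show ?thesis by simp
    qed
    have "real N * ((\<integral>x. \<psi> x \<partial>\<mu>) - (\<integral>x. \<psi> x \<partial>\<nu>)) \<le> real N * d + 1"
      using i1 i2 i3 by (simp add: right_diff_distrib)
    then have "real N * ((\<integral>x. \<psi> x \<partial>\<mu>) - (\<integral>x. \<psi> x \<partial>\<nu>)) \<le> real N * (d + 1 / real N)"
      using N by (simp add: distrib_left)
    then show ?thesis using N by (simp add: mult_le_cancel_left_pos)
  qed
  show ?thesis
  proof (rule ccontr)
    assume "\<not> ?thesis"
    then have "0 < (\<integral>x. \<psi> x \<partial>\<mu>) - (\<integral>x. \<psi> x \<partial>\<nu>) - d" by simp
    from ex_inverse_of_nat_less[OF this] obtain N :: nat where
      "N > 0" "inverse (real N) < (\<integral>x. \<psi> x \<partial>\<mu>) - (\<integral>x. \<psi> x \<partial>\<nu>) - d" by blast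
    with key[of N] show False by (simp add: divide_inverse)
  qed
qed

lemma tv_abs:
  fixes \<phi> :: "'a \<Rightarrow> real"
  assumes mu: "prob_space \<mu>" "sets \<mu> = sets M"
    and nu: "prob_space \<nu>" "sets \<nu> = sets M"
    and phi: "\<phi> \<in> borel_measurable M" and c: "c \<ge> 0" and pb: "\<forall>x\<in>space M. \<bar>\<phi> x\<bar> \<le> c"
    and d: "\<forall>A\<in>sets M. \<bar>measure \<mu> A - measure \<nu> A\<bar> \<le> d"
  shows "\<bar>(\<integral>x. \<phi> x \<partial>\<mu>) - (\<integral>x. \<phi> x \<partial>\<nu>)\<bar> \<le> 2 * c * d"
proof (cases "c = 0")
  case True
  have smu: "space \<mu> = space M" using sets_eq_imp_space_eq[OF mu(2)] .
  have snu: "space \<nu> = space M" using sets_eq_imp_space_eq[OF nu(2)] .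
  have z: "\<phi> x = 0" if "x \<in> space M" for x using pb that True by force
  have "(\<integral>x. \<phi> x \<partial>\<mu>) = (\<integral>x. 0 \<partial>\<mu>)"
    by (rule Bochner_Integration.integral_cong[OF refl]) (use z smu in auto)
  moreover have "(\<integral>x. \<phi> x \<partial>\<nu>) = (\<integral>x. 0 \<partial>\<nu>)"
    by (rule Bochner_Integration.integral_cong[OF refl]) (use z snu in auto)
  ultimately show ?thesis using True by simp
next
  case False
  then have cpos: "c > 0" using c by simp
  define \<psi> where "\<psi> x = (\<phi> x + c) / (2 * c)" for x
  have psi: "\<psi> \<in> borel_measurable M" unfolding \<psi>_def using phi by simp
  have pb': "\<forall>x\<in>space M. 0 \<le> \<psi> x \<and> \<psi> x \<le> 1"
  proof
    fix x assume "x \<in> space M"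
    then have "\<bar>\<phi> x\<bar> \<le> c" using pb by simp
    then have "0 \<le> \<phi> x + c" "\<phi> x + c \<le> 2 * c" by linarith+
    then show "0 \<le> \<psi> x \<and> \<psi> x \<le> 1" unfolding \<psi>_def using cpos by simp
  qed
  have int_eq: "(\<integral>x. \<psi> x \<partial>N) = ((\<integral>x. \<phi> x \<partial>N) + c) / (2 * c)"
    if N: "prob_space N" "sets N = sets M" for N
  proof -
    interpret N: prob_space N by (rule N(1))
    have sN: "space N = space M" using sets_eq_imp_space_eq[OF N(2)] .
    have phiN: "\<phi> \<in> borel_measurable N" by (subst measurable_cong_sets[OF N(2) refl]) (rule phi)
    have intN: "integrable N \<phi>"
      by (rule N.integrable_const_bound[where B=c]) (use pb sN phiN in auto)
    have "(\<integral>x. \<psi> x \<partial>N) = (\<integral>x. \<phi> x + c \<partial>N) / (2 * c)" unfolding \<psi>_def by simp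
    also have "(\<integral>x. \<phi> x + c \<partial>N) = (\<integral>x. \<phi> x \<partial>N) + c"
      using intN by (simp add: N.prob_space)
    finally show ?thesis .
  qed
  have d1: "\<forall>A\<in>sets M. measure \<mu> A - measure \<nu> A \<le> d" using d by (auto simp: abs_le_iff)
  have d2: "\<forall>A\<in>sets M. measure \<nu> A - measure \<mu> A \<le> d" using d by (auto simp: abs_le_iff)
  have t1: "(\<integral>x. \<psi> x \<partial>\<mu>) - (\<integral>x. \<psi> x \<partial>\<nu>) \<le> d"
    by (rule tv01[OF mu nu psi pb' d1])
  have t2: "(\<integral>x. \<psi> x \<partial>\<nu>) - (\<integral>x. \<psi> x \<partial>\<mu>) \<le> d"
    by (rule tv01[OF nu mu psi pb' d2])
  have e: "(\<integral>x. \<psi> x \<partial>\<mu>) - (\<integral>x. \<psi> x \<partial>\<nu>) = ((\<integral>x. \<phi> x \<partial>\<mu>) - (\<integral>x. \<phi> x \<partial>\<nu>)) / (2 * c)"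
    unfolding int_eq[OF mu] int_eq[OF nu] using cpos by (simp add: field_simps)
  define X where "X = (\<integral>x. \<phi> x \<partial>\<mu>) - (\<integral>x. \<phi> x \<partial>\<nu>)"
  have "X / (2 * c) \<le> d" "(- X) / (2 * c) \<le> d"
    using t1 t2 e unfolding X_def by linarith+
  then have "X \<le> d * (2 * c)" "- X \<le> d * (2 * c)"
    using cpos by (simp_all only: pos_divide_le_eq zero_less_mult_iff zero_less_numeral simp_thms)
  then have "\<bar>X\<bar> \<le> 2 * c * d" by (simp add: mult.commute mult.left_commute)
  then show ?thesis unfolding X_def .
qed

lemma dTV_ge:
  assumes "prob_space \<mu>" "prob_space \<nu>" "A \<in> sets M"
  shows "\<bar>measure \<mu> A - measure \<nu> A\<bar> \<le> dTV M \<mu> \<nu>"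
  unfolding dTV_def
proof (rule cSUP_upper[OF assms(3)])
  have "\<bar>measure \<mu> B - measure \<nu> B\<bar> \<le> 1" for B
    using prob_space.prob_le_1[OF assms(1), of B] prob_space.prob_le_1[OF assms(2), of B]
      measure_nonneg[of \<mu> B] measure_nonneg[of \<nu> B] by linarith
  then show "bdd_above ((\<lambda>A. \<bar>measure \<mu> A - measure \<nu> A\<bar>) ` sets M)"
    by (intro bdd_aboveI[where M=1]) auto
qed

lemma glue_meas:
  assumes i: "i < n" and x: "\<forall>l\<le>i. x l \<in> space M" and a: "a \<in> space M"
    and kk: "k \<le> k'"
  shows "(\<lambda>zs. glue n i x (\<lambda>j. if j < k' then a else zs (j - k)))
           \<in> PiM {..<n - 1 - i - k} (\<lambda>_. M) \<rightarrow>\<^sub>M PiM {..<n} (\<lambda>_. M)"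
proof (rule measurable_PiM_single')
  fix l assume l: "l \<in> {..<n}"
  show "(\<lambda>zs. glue n i x (\<lambda>j. if j < k' then a else zs (j - k)) l) \<in> PiM {..<n - 1 - i - k} (\<lambda>_. M) \<rightarrow>\<^sub>M M"
  proof (cases "l \<le> i")
    case True
    then have "(\<lambda>zs. glue n i x (\<lambda>j. if j < k' then a else zs (j - k)) l) = (\<lambda>zs. x l)"
      by (simp add: glue_def)
    then show ?thesis using x True by simp
  next
    case False
    show ?thesis
    proof (cases "l - i - 1 < k'")
      case True
      then have "(\<lambda>zs. glue n i x (\<lambda>j. if j < k' then a else zs (j - k)) l) = (\<lambda>zs. a)"
        using False l by (simp add: glue_def)
      then show ?thesis using a by simp
    next
      case True2: False
      then have e: "(\<lambda>zs. glue n i x (\<lambda>j. if j < k' then a else zs (j - k)) l) = (\<lambda>zs. zs (l - i - 1 - k))"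
        using False l by (simp add: glue_def)
      have "l - i - 1 - k \<in> {..<n - 1 - i - k}" using l False True2 kk by auto
      from measurable_component_singleton[OF this, of "\<lambda>_. M"]
      show ?thesis unfolding e .
    qed
  qed
next
  show "(\<lambda>zs. glue n i x (\<lambda>j. if j < k' then a else zs (j - k))) \<in> space (PiM {..<n - 1 - i - k} (\<lambda>_. M)) \<rightarrow> (\<Pi>\<^sub>E l\<in>{..<n}. space M)"
  proof
    fix zs assume zs: "zs \<in> space (PiM {..<n - 1 - i - k} (\<lambda>_. M))"
    then have zs': "\<And>j. j < n - 1 - i - k \<Longrightarrow> zs j \<in> space M" by (auto simp: space_PiM)
    show "glue n i x (\<lambda>j. if j < k' then a else zs (j - k)) \<in> (\<Pi>\<^sub>E l\<in>{..<n}. space M)"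
      unfolding PiE_iff extensional_def mem_Collect_eq
    proof (intro conjI ballI allI impI)
      fix l assume l: "l \<in> {..<n}"
      show "glue n i x (\<lambda>j. if j < k' then a else zs (j - k)) l \<in> space M"
      proof (cases "l \<le> i")
        case True then show ?thesis using x by (simp add: glue_def)
      next
        case False
        show ?thesis
        proof (cases "l - i - 1 < k'")
          case True then show ?thesis using a False l by (simp add: glue_def)
        next
          case True2: False
          have "l - i - 1 - k < n - 1 - i - k" using l False True2 kk by auto
          then show ?thesis using zs' False True2 l by (simp add: glue_def)
        qed
      qed
    next
      fix l assume l: "l \<notin> {..<n}"
      have nl: "\<not> l \<le> i" "\<not> l < n" using i l by auto
      show "glue n i x (\<lambda>j. if j < k' then a else zs (j - k)) l = undefined"
        using nl by (simp add: glue_def)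
    qed
  qed
qed

lemma shift_meas:
  fixes m k :: nat
  shows "(\<lambda>ys. (\<lambda>j. ys (j + k))) \<in> PiM {..<m} (\<lambda>_. M) \<rightarrow>\<^sub>M PiM {..<m - k} (\<lambda>_. M)"
proof (rule measurable_PiM_single')
  fix j assume j: "j \<in> {..<m - k}"
  then have "j + k \<in> {..<m}" by (simp add: less_diff_conv)
  from measurable_component_singleton[OF this, of "\<lambda>_. M"]
  show "(\<lambda>ys. ys (j + k)) \<in> PiM {..<m} (\<lambda>_. M) \<rightarrow>\<^sub>M M" .
next
  show "(\<lambda>ys. (\<lambda>j. ys (j + k))) \<in> space (PiM {..<m} (\<lambda>_. M)) \<rightarrow> (\<Pi>\<^sub>E j\<in>{..<m - k}. space M)"
    by (auto simp: space_PiM PiE_iff extensional_def less_diff_conv)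
qed

theorem lemma2:
  fixes M :: "'a measure" and P :: "'a \<Rightarrow> 'a measure" and \<pi> :: "'a measure"
    and C :: "'a set" and u Mb r L :: real
    and n :: nat and c :: "nat \<Rightarrow> real" and f :: "(nat \<Rightarrow> 'a) \<Rightarrow> real"
    and i :: nat and x :: "nat \<Rightarrow> 'a"
  assumes kernel: "markov_kernel M P"
    and irred: "irreducible M P" and aper: "aperiodic M P"
    and inv: "invariant_prob M P \<pi>"
    and uniq: "\<And>\<nu>. invariant_prob M P \<nu> \<Longrightarrow> \<nu> = \<pi>"
    and C_meas: "C \<in> sets M" and C_ne: "C \<noteq> {}"
    and u_gt: "u > 1" and Mb_pos: "Mb > 0"
    and drift: "\<forall>y\<in>C. exp_pow_return M P C u y \<le> ennreal Mb"
    and r_pos: "0 < r" and r_lt: "r < 1" and L_ge: "L \<ge> 1"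
    and geo: "\<forall>y\<in>C. \<forall>k. dTV M (kpow M P k y) \<pi> \<le> L * r ^ k"
    and n_ge: "n \<ge> 1"
    and c_nonneg: "\<forall>j<n. c j \<ge> 0"
    and f_meas: "f \<in> borel_measurable (PiM {..<n} (\<lambda>_. M))"
    and f_bd: "\<forall>y\<in>space (PiM {..<n} (\<lambda>_. M)). \<forall>z\<in>space (PiM {..<n} (\<lambda>_. M)).
                 \<bar>f y - f z\<bar> \<le> (\<Sum>j<n. c j * (if y j \<noteq> z j then 1 else 0))"
    and i_lt: "i < n"
    and x_sp: "\<forall>k<i. x k \<in> space M" and x_C: "x i \<in> C"
  shows "\<bar>g_fun P n f i x - g_pi P \<pi> n f i x\<bar>
           \<le> 2 * L * (\<Sum>j=i+1..n-1. c j * r ^ (j - i))"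
proof -
  have K: "markov_kernel M P" by (rule kernel)
  have sC: "C \<subseteq> space M" using C_meas sets.sets_into_space by auto
  define a where "a = x i"
  have a: "a \<in> space M" using x_C sC unfolding a_def by auto
  have xs: "\<forall>l\<le>i. x l \<in> space M"
  proof (intro allI impI)
    fix l assume "l \<le> i"
    then show "x l \<in> space M"
      using x_sp a unfolding a_def by (cases "l = i") auto
  qed
  have pis: "prob_space \<pi>" "sets \<pi> = sets M" using inv by (auto simp: invariant_prob_def)
  have spi: "space \<pi> = space M" using sets_eq_imp_space_eq[OF pis(2)] .
  define m where "m = n - 1 - i"
  define G where "G k zs = f (glue n i x (\<lambda>j. if j < k then a else zs (j - k)))
      - f (glue n i x (\<lambda>j. if j < Suc k then a else zs (j - k)))" for k zs
  define K0 where "K0 = f (glue n i x (\<lambda>_. a))"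
  define cc where "cc k = c (i + Suc k)" for k
  define D where "D k ys = G k (\<lambda>j. ys (j + k))" for k ys
  define \<phi> where "\<phi> k z = path_exp P (m - Suc k) (\<lambda>ys. G k (scons z ys)) z" for k z
  have cc_nn: "cc k \<ge> 0" if "k < m" for k using c_nonneg that unfolding cc_def m_def by auto
  have sucm: "Suc (m - Suc k) = n - 1 - i - k" if "k < m" for k using that unfolding m_def by auto
  have G_meas: "G k \<in> borel_measurable (PiM {..<Suc (m - Suc k)} (\<lambda>_. M))" if k: "k < m" for k
  proof -
    have g1: "(\<lambda>zs. glue n i x (\<lambda>j. if j < k then a else zs (j - k)))
           \<in> PiM {..<n - 1 - i - k} (\<lambda>_. M) \<rightarrow>\<^sub>M PiM {..<n} (\<lambda>_. M)"
      by (rule glue_meas[OF i_lt xs a]) simp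
    have g2: "(\<lambda>zs. glue n i x (\<lambda>j. if j < Suc k then a else zs (j - k)))
           \<in> PiM {..<n - 1 - i - k} (\<lambda>_. M) \<rightarrow>\<^sub>M PiM {..<n} (\<lambda>_. M)"
      by (rule glue_meas[OF i_lt xs a]) simp
    have "G k \<in> borel_measurable (PiM {..<n - 1 - i - k} (\<lambda>_. M))"
      unfolding G_def
      by (rule borel_measurable_diff[OF measurable_compose[OF g1 f_meas] measurable_compose[OF g2 f_meas]])
    then show ?thesis unfolding sucm[OF k] .
  qed
  have G_bd: "\<forall>zs\<in>space (PiM {..<Suc (m - Suc k)} (\<lambda>_. M)). \<bar>G k zs\<bar> \<le> cc k" if k: "k < m" for k
  proof
    fix zs assume zs: "zs \<in> space (PiM {..<Suc (m - Suc k)} (\<lambda>_. M))"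
    then have zs': "zs \<in> space (PiM {..<n - 1 - i - k} (\<lambda>_. M))" unfolding sucm[OF k] .
    define u where "u = glue n i x (\<lambda>j. if j < k then a else zs (j - k))"
    define v where "v = glue n i x (\<lambda>j. if j < Suc k then a else zs (j - k))"
    have u: "u \<in> space (PiM {..<n} (\<lambda>_. M))" unfolding u_def
      by (rule measurable_space[OF glue_meas[OF i_lt xs a] zs']) simp
    have v: "v \<in> space (PiM {..<n} (\<lambda>_. M))" unfolding v_def
      by (rule measurable_space[OF glue_meas[OF i_lt xs a] zs']) simp
    have uv: "u j = v j" if "j \<noteq> i + Suc k" for j
      using that unfolding u_def v_def glue_def by auto
    have ik: "i + Suc k < n" using k unfolding m_def by auto
    have "\<bar>G k zs\<bar> = \<bar>f u - f v\<bar>" unfolding G_def u_def v_def ..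
    also have "\<dots> \<le> (\<Sum>j<n. c j * (if u j \<noteq> v j then 1 else 0))" using f_bd u v by blast
    also have "\<dots> \<le> (\<Sum>j<n. if j = i + Suc k then c j else 0)"
    proof (rule sum_mono)
      fix j assume j: "j \<in> {..<n}"
      show "c j * (if u j \<noteq> v j then 1 else 0) \<le> (if j = i + Suc k then c j else 0)"
      proof (cases "j = i + Suc k")
        case True then show ?thesis using c_nonneg j by auto
      next
        case False then show ?thesis using uv[OF False] by simp
      qed
    qed
    also have "\<dots> = cc k" using ik unfolding cc_def by simp
    finally show "\<bar>G k zs\<bar> \<le> cc k" .
  qed
  have D_meas: "D k \<in> borel_measurable (PiM {..<m} (\<lambda>_. M))" if k: "k < m" for k
  proof -
    have e: "m - k = Suc (m - Suc k)" using k by simp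
    show ?thesis unfolding D_def
      using measurable_compose[OF shift_meas[where m=m and k=k and M=M] G_meas[OF k, folded e]] by simp
  qed
  have D_bd: "\<forall>ys\<in>space (PiM {..<m} (\<lambda>_. M)). \<bar>D k ys\<bar> \<le> cc k" if k: "k < m" for k
  proof
    fix ys assume ys: "ys \<in> space (PiM {..<m} (\<lambda>_. M))"
    have e: "m - k = Suc (m - Suc k)" using k by simp
    have "(\<lambda>j. ys (j + k)) \<in> space (PiM {..<Suc (m - Suc k)} (\<lambda>_. M))"
      using measurable_space[OF shift_meas[where m=m and k=k and M=M] ys] unfolding e .
    then show "\<bar>D k ys\<bar> \<le> cc k" unfolding D_def using G_bd[OF k] by blast
  qed
  have h_eq: "f (glue n i x ys) = K0 + (\<Sum>k<m. D k ys)" for ys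
  proof -
    define W where "W k = f (glue n i x (\<lambda>j. if j < k then a else ys j))" for k
    have Dk: "D k ys = W k - W (Suc k)" for k
    proof -
      have "(\<lambda>j. if j < k then a else ys (j - k + k)) = (\<lambda>j. if j < k then a else ys j)"
        by (rule ext) simp
      moreover have "(\<lambda>j. if j < Suc k then a else ys (j - k + k)) = (\<lambda>j. if j < Suc k then a else ys j)"
        by (rule ext) simp
      ultimately show ?thesis unfolding D_def G_def W_def by simp
    qed
    have W0: "W 0 = f (glue n i x ys)" unfolding W_def by simp
    have Wm: "W m = K0"
    proof -
      have "glue n i x (\<lambda>j. if j < m then a else ys j) = glue n i x (\<lambda>_. a)"
        unfolding glue_def m_def by (rule ext) auto
      then show ?thesis unfolding W_def K0_def by simp
    qed
    have "(\<Sum>k<m. D k ys) = W 0 - W m" unfolding Dk by (rule sum_lessThan_telescope')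
    then show ?thesis using W0 Wm by simp
  qed
  have h_fun: "(\<lambda>ys. f (glue n i x ys)) = (\<lambda>ys. K0 + (\<Sum>k<m. D k ys))"
    by (rule ext) (rule h_eq)
  have lin: "path_exp P m (\<lambda>ys. f (glue n i x ys)) z = K0 + (\<Sum>k<m. path_exp P m (D k) z)"
    if z: "z \<in> space M" for z
  proof -
    interpret pz: prob_space "pm M P m z" using pm_facts(1)[OF K z] .
    have sp: "space (pm M P m z) = space (PiM {..<m} (\<lambda>_. M))" using pm_facts(3)[OF K z] .
    have Dm: "D k \<in> borel_measurable (pm M P m z)" if "k < m" for k
      by (subst measurable_cong_sets[OF pm_facts(2)[OF K z] refl]) (rule D_meas[OF that])
    have Dint: "integrable (pm M P m z) (D k)" if "k \<in> {..<m}" for k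
      by (rule pz.integrable_const_bound[where B="cc k"]) (use D_bd Dm that sp in auto)
    have hm: "(\<lambda>ys. K0 + (\<Sum>k<m. D k ys)) \<in> borel_measurable (PiM {..<m} (\<lambda>_. M))"
      using D_meas by (intro borel_measurable_add borel_measurable_const borel_measurable_sum) auto
    have hb: "\<forall>ys\<in>space (PiM {..<m} (\<lambda>_. M)). \<bar>K0 + (\<Sum>k<m. D k ys)\<bar> \<le> \<bar>K0\<bar> + (\<Sum>k<m. cc k)"
    proof
      fix ys assume ys: "ys \<in> space (PiM {..<m} (\<lambda>_. M))"
      have "\<bar>\<Sum>k<m. D k ys\<bar> \<le> (\<Sum>k<m. \<bar>D k ys\<bar>)" by (rule sum_abs)
      also have "\<dots> \<le> (\<Sum>k<m. cc k)" by (rule sum_mono) (use D_bd ys in auto)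
      finally show "\<bar>K0 + (\<Sum>k<m. D k ys)\<bar> \<le> \<bar>K0\<bar> + (\<Sum>k<m. cc k)" by linarith
    qed
    have "path_exp P m (\<lambda>ys. f (glue n i x ys)) z = integral\<^sup>L (pm M P m z) (\<lambda>ys. K0 + (\<Sum>k<m. D k ys))"
      unfolding h_fun by (rule pe_pm[OF K hm hb z])
    also have "\<dots> = K0 + (\<Sum>k<m. integral\<^sup>L (pm M P m z) (D k))"
    proof -
      have sint: "integrable (pm M P m z) (\<lambda>ys. \<Sum>k<m. D k ys)"
        by (rule Bochner_Integration.integrable_sum) (rule Dint)
      have "integral\<^sup>L (pm M P m z) (\<lambda>ys. K0 + (\<Sum>k<m. D k ys))
          = integral\<^sup>L (pm M P m z) (\<lambda>ys. K0) + integral\<^sup>L (pm M P m z) (\<lambda>ys. \<Sum>k<m. D k ys)"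
        by (rule Bochner_Integration.integral_add[OF pz.integrable_const sint])
      also have "integral\<^sup>L (pm M P m z) (\<lambda>ys. \<Sum>k<m. D k ys) = (\<Sum>k<m. integral\<^sup>L (pm M P m z) (D k))"
        by (rule Bochner_Integration.integral_sum) (rule Dint)
      finally show ?thesis by (simp add: pz.prob_space)
    qed
    also have "\<dots> = K0 + (\<Sum>k<m. path_exp P m (D k) z)"
      using pe_pm[OF K D_meas D_bd z] by simp
    finally show ?thesis .
  qed
  have mk: "path_exp P m (D k) z = (\<integral>w. \<phi> k w \<partial>kpow M P (Suc k) z)" if k: "k < m" and z: "z \<in> space M" for k z
  proof -
    have e: "m = k + Suc (m - Suc k)" using k by simp
    have "path_exp P m (D k) z = path_exp P (k + Suc (m - Suc k)) (\<lambda>ys. G k (\<lambda>j. ys (j + k))) z"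
      unfolding D_def using e by simp
    also have "\<dots> = (\<integral>w. \<phi> k w \<partial>kpow M P (Suc k) z)"
      unfolding \<phi>_def by (rule markov_shift[OF K G_meas[OF k] G_bd[OF k] z])
    finally show ?thesis .
  qed
  have phi_m: "\<phi> k \<in> borel_measurable M" if k: "k < m" for k
    unfolding \<phi>_def by (rule phi_meas(1)[OF K G_meas[OF k] G_bd[OF k]])
  have phi_b: "\<forall>z\<in>space M. \<bar>\<phi> k z\<bar> \<le> cc k" if k: "k < m" for k
    unfolding \<phi>_def by (rule phi_meas(2)[OF K G_meas[OF k] G_bd[OF k]])
  have pe_m: "(\<lambda>z. path_exp P m (D k) z) \<in> borel_measurable M" if k: "k < m" for k
    by (rule pe_meas(1)[OF K D_meas[OF k] D_bd[OF k]])
  have pe_b: "\<forall>z\<in>space M. \<bar>path_exp P m (D k) z\<bar> \<le> cc k" if k: "k < m" for k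
    by (rule pe_meas(2)[OF K D_meas[OF k] D_bd[OF k]])
  interpret pi: prob_space \<pi> by (rule pis(1))
  have pe_int: "integrable \<pi> (\<lambda>z. path_exp P m (D k) z)" if k: "k \<in> {..<m}" for k
  proof -
    have "(\<lambda>z. path_exp P m (D k) z) \<in> borel_measurable \<pi>"
      by (subst measurable_cong_sets[OF pis(2) refl]) (rule pe_m, use k in simp)
    then show ?thesis
      by (intro pi.integrable_const_bound[where B="cc k"]) (use pe_b k spi in auto)
  qed
  have gf: "g_fun P n f i x = K0 + (\<Sum>k<m. (\<integral>w. \<phi> k w \<partial>kpow M P (Suc k) a))"
  proof -
    have "g_fun P n f i x = path_exp P m (\<lambda>ys. f (glue n i x ys)) a"
      unfolding g_fun_def m_def a_def ..
    also have "\<dots> = K0 + (\<Sum>k<m. path_exp P m (D k) a)" by (rule lin[OF a])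
    also have "\<dots> = K0 + (\<Sum>k<m. (\<integral>w. \<phi> k w \<partial>kpow M P (Suc k) a))"
      using mk a by simp
    finally show ?thesis .
  qed
  have gp: "g_pi P \<pi> n f i x = K0 + (\<Sum>k<m. (\<integral>w. \<phi> k w \<partial>\<pi>))"
  proof -
    have "g_pi P \<pi> n f i x = (\<integral>z. path_exp P m (\<lambda>ys. f (glue n i x ys)) z \<partial>\<pi>)"
      unfolding g_pi_def m_def ..
    also have "\<dots> = (\<integral>z. K0 + (\<Sum>k<m. path_exp P m (D k) z) \<partial>\<pi>)"
      by (rule Bochner_Integration.integral_cong[OF refl]) (use lin spi in auto)
    also have "\<dots> = K0 + (\<Sum>k<m. (\<integral>z. path_exp P m (D k) z \<partial>\<pi>))"
    proof -
      have sint: "integrable \<pi> (\<lambda>z. \<Sum>k<m. path_exp P m (D k) z)"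
        by (rule Bochner_Integration.integrable_sum) (rule pe_int)
      have "(\<integral>z. K0 + (\<Sum>k<m. path_exp P m (D k) z) \<partial>\<pi>)
          = (\<integral>z. K0 \<partial>\<pi>) + (\<integral>z. (\<Sum>k<m. path_exp P m (D k) z) \<partial>\<pi>)"
        by (rule Bochner_Integration.integral_add[OF pi.integrable_const sint])
      also have "(\<integral>z. (\<Sum>k<m. path_exp P m (D k) z) \<partial>\<pi>) = (\<Sum>k<m. (\<integral>z. path_exp P m (D k) z \<partial>\<pi>))"
        by (rule Bochner_Integration.integral_sum) (rule pe_int)
      finally show ?thesis by (simp add: pi.prob_space)
    qed
    also have "\<dots> = K0 + (\<Sum>k<m. (\<integral>w. \<phi> k w \<partial>\<pi>))"
    proof -
      have "(\<integral>z. path_exp P m (D k) z \<partial>\<pi>) = (\<integral>w. \<phi> k w \<partial>\<pi>)" if k: "k < m" for k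
      proof -
        have "(\<integral>z. path_exp P m (D k) z \<partial>\<pi>) = (\<integral>z. (\<integral>w. \<phi> k w \<partial>kpow M P (Suc k) z) \<partial>\<pi>)"
          by (rule Bochner_Integration.integral_cong[OF refl]) (use mk[OF k] spi in auto)
        also have "\<dots> = (\<integral>w. \<phi> k w \<partial>\<pi>)"
          by (rule inv_integral[OF K inv phi_m[OF k] phi_b[OF k]])
        finally show ?thesis .
      qed
      then show ?thesis by simp
    qed
    finally show ?thesis .
  qed
  have each: "\<bar>(\<integral>w. \<phi> k w \<partial>kpow M P (Suc k) a) - (\<integral>w. \<phi> k w \<partial>\<pi>)\<bar> \<le> 2 * cc k * (L * r ^ Suc k)"
    if k: "k < m" for k
  proof (rule tv_abs[OF kpow_facts[OF K a] pis phi_m[OF k] cc_nn[OF k] phi_b[OF k]])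
    show "\<forall>A\<in>sets M. \<bar>measure (kpow M P (Suc k) a) A - measure \<pi> A\<bar> \<le> L * r ^ Suc k"
    proof
      fix A assume A: "A \<in> sets M"
      have "\<bar>measure (kpow M P (Suc k) a) A - measure \<pi> A\<bar> \<le> dTV M (kpow M P (Suc k) a) \<pi>"
        by (rule dTV_ge[OF kpow_facts(1)[OF K a] pis(1) A])
      also have "\<dots> \<le> L * r ^ Suc k" using geo x_C unfolding a_def by blast
      finally show "\<bar>measure (kpow M P (Suc k) a) A - measure \<pi> A\<bar> \<le> L * r ^ Suc k" .
    qed
  qed
  have "\<bar>g_fun P n f i x - g_pi P \<pi> n f i x\<bar>
      = \<bar>\<Sum>k<m. ((\<integral>w. \<phi> k w \<partial>kpow M P (Suc k) a) - (\<integral>w. \<phi> k w \<partial>\<pi>))\<bar>"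
    unfolding gf gp by (simp add: sum_subtractf)
  also have "\<dots> \<le> (\<Sum>k<m. \<bar>(\<integral>w. \<phi> k w \<partial>kpow M P (Suc k) a) - (\<integral>w. \<phi> k w \<partial>\<pi>)\<bar>)"
    by (rule sum_abs)
  also have "\<dots> \<le> (\<Sum>k<m. 2 * cc k * (L * r ^ Suc k))"
    by (rule sum_mono) (use each in simp)
  also have "\<dots> = 2 * L * (\<Sum>k<m. c (i + Suc k) * r ^ Suc k)"
    unfolding cc_def sum_distrib_left by (intro sum.cong refl) (simp only: mult_ac)
  also have "(\<Sum>k<m. c (i + Suc k) * r ^ Suc k) = (\<Sum>j=i+1..n-1. c j * r ^ (j - i))"
  proof -
    have img: "{i+1..n-1} = (\<lambda>k. i + Suc k) ` {..<m}"
    proof (rule set_eqI)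
      fix j
      show "j \<in> {i+1..n-1} \<longleftrightarrow> j \<in> (\<lambda>k. i + Suc k) ` {..<m}"
      proof
        assume j: "j \<in> {i+1..n-1}"
        show "j \<in> (\<lambda>k. i + Suc k) ` {..<m}"
          by (rule image_eqI[where x="j - i - 1"]) (use j n_ge in \<open>auto simp: m_def\<close>)
      next
        assume "j \<in> (\<lambda>k. i + Suc k) ` {..<m}"
        then show "j \<in> {i+1..n-1}" using n_ge by (auto simp: m_def)
      qed
    qed
    have inj: "inj_on (\<lambda>k. i + Suc k) {..<m}" by (auto simp: inj_on_def)
    show ?thesis unfolding img sum.reindex[OF inj] by (simp add: comp_def)
  qed
  finally show ?thesis .
qed

end
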